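(* Let $x$ be a non-negative random variable for which there exist constants $\alpha>0$ and $k>0$ such that $\log(\alpha)/k\ge1$ and $\Pr[x\le\epsilon]\le\alpha\epsilon^k$ for all $\epsilon>0$. Then \[ \mathbb E[\max(1,\log(1/x))]\le\frac{1+\log\alpha}{k}. \]
   Context: $\log$ denotes the natural logarithm. *)

theory Defs
  imports "HOL-Probability.Probability"
begin

end

theory Submission
  imports Defs "HOL-Real_Asymp.Real_Asymp"
begin

theorem mainTheorem9:
  fixes M :: "'a measure" and X :: "'a \<Rightarrow> real" and \<alpha> k :: real
  assumes "prob_space M"
    and "X \<in> borel_measurable M"
    and "\<forall>\<omega>\<in>space M. X \<omega> \<ge> 0"
    and "\<alpha> > 0" and "k > 0" and "ln \<alpha> / k \<ge> 1"
    and "\<forall>\<epsilon>>0. measure M {\<omega>\<in>space M. X \<omega> \<le> \<epsilon>} \<le> \<alpha> * \<epsilon> powr k"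
  shows "(\<integral>\<^sup>+ \<omega>. ennreal (max 1 (ln (1 / X \<omega>))) \<partial>M) \<le> ennreal ((1 + ln \<alpha>) / k)"
proof -
  interpret P: prob_space M by (rule assms(1))
  interpret PS: pair_sigma_finite M lborel
    by (simp add: pair_sigma_finite_def P.sigma_finite_measure_axioms lborel.sigma_finite_measure_axioms)
  note Xm[measurable] = assms(2)
  define L where "L \<omega> = ln (1 / X \<omega>)" for \<omega>
  have Lm[measurable]: "L \<in> borel_measurable M" unfolding L_def by measurable
  define t0 where "t0 = ln \<alpha> / k"
  have t0: "t0 \<ge> 1" using assms(6) by (simp add: t0_def)
  define G where "G \<omega> t = (if 1 < t \<and> t < L \<omega> then 1 else 0 :: ennreal)" for \<omega> t
  have Gm: "case_prod G \<in> borel_measurable (M \<Otimes>\<^sub>M lborel)"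
    unfolding G_def by measurable
  have pw: "ennreal (max 1 (L \<omega>)) = 1 + (\<integral>\<^sup>+ t. G \<omega> t \<partial>lborel)" for \<omega>
  proof -
    have "(\<integral>\<^sup>+ t. G \<omega> t \<partial>lborel) = (\<integral>\<^sup>+ t. indicator {1<..<L \<omega>} t \<partial>lborel)"
      by (intro nn_integral_cong) (auto simp: G_def indicator_def)
    also have "\<dots> = emeasure lborel {1<..<L \<omega>}" by simp
    finally have e: "(\<integral>\<^sup>+ t. G \<omega> t \<partial>lborel) = emeasure lborel {1<..<L \<omega>}" .
    show ?thesis
    proof (cases "L \<omega> \<le> 1")
      case True
      then show ?thesis using e by simp
    next
      case False
      then show ?thesis using e ennreal_plus[of 1 "L \<omega> - 1"] by simp
    qed
  qed
  have "(\<integral>\<^sup>+ \<omega>. ennreal (max 1 (ln (1 / X \<omega>))) \<partial>M) = (\<integral>\<^sup>+ \<omega>. 1 + (\<integral>\<^sup>+ t. G \<omega> t \<partial>lborel) \<partial>M)"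
    using pw by (simp add: L_def)
  also have "\<dots> = (\<integral>\<^sup>+ \<omega>. 1 \<partial>M) + (\<integral>\<^sup>+ \<omega>. (\<integral>\<^sup>+ t. G \<omega> t \<partial>lborel) \<partial>M)"
    using lborel.borel_measurable_nn_integral_fst[OF Gm] by (intro nn_integral_add) auto
  also have "(\<integral>\<^sup>+ \<omega>. (\<integral>\<^sup>+ t. G \<omega> t \<partial>lborel) \<partial>M) = (\<integral>\<^sup>+ t. (\<integral>\<^sup>+ \<omega>. G \<omega> t \<partial>M) \<partial>lborel)"
    using PS.Fubini'[OF Gm] by simp
  finally have eq1: "(\<integral>\<^sup>+ \<omega>. ennreal (max 1 (ln (1 / X \<omega>))) \<partial>M) = 1 + (\<integral>\<^sup>+ t. (\<integral>\<^sup>+ \<omega>. G \<omega> t \<partial>M) \<partial>lborel)"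
    by (simp add: P.emeasure_space_1)
  define h where "h t = indicator {1<..<t0} t + ennreal (\<alpha> * exp (- k * t)) * indicator {t0..} t" for t
  have hb: "(\<integral>\<^sup>+ \<omega>. G \<omega> t \<partial>M) \<le> h t" for t
  proof -
    define S where "S = {\<omega>\<in>space M. 1 < t \<and> t < L \<omega>}"
    have Sm: "S \<in> sets M" unfolding S_def by measurable
    have "(\<integral>\<^sup>+ \<omega>. G \<omega> t \<partial>M) = (\<integral>\<^sup>+ \<omega>. indicator S \<omega> \<partial>M)"
      by (intro nn_integral_cong) (auto simp: G_def S_def indicator_def)
    also have "\<dots> = emeasure M S" using Sm by simp
    finally have e: "(\<integral>\<^sup>+ \<omega>. G \<omega> t \<partial>M) = emeasure M S" .
    show ?thesis
    proof (cases "1 < t")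
      case False
      then have "S = {}" by (auto simp: S_def)
      then show ?thesis using e by simp
    next
      case t1: True
      show ?thesis
      proof (cases "t < t0")
        case True
        then have "h t = 1" using t1 by (simp add: h_def indicator_def)
        then show ?thesis using e P.emeasure_le_1 by simp
      next
        case False
        then have ht: "h t = ennreal (\<alpha> * exp (- k * t))" using t0 by (simp add: h_def indicator_def)
        have sub: "S \<subseteq> {\<omega>\<in>space M. X \<omega> \<le> exp (- t)}"
        proof safe
          fix \<omega> assume "\<omega> \<in> S"
          then have w: "\<omega> \<in> space M" and lt: "t < ln (1 / X \<omega>)" and "1 < t" by (auto simp: S_def L_def)
          show "\<omega> \<in> space M" by (rule w)
          have X0: "X \<omega> \<ge> 0" using assms(3) w by auto
          have Xp: "X \<omega> > 0"
          proof (rule ccontr)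
            assume "\<not> X \<omega> > 0"
            then have "X \<omega> = 0" using X0 by simp
            then show False using lt \<open>1 < t\<close> by simp
          qed
          have "exp t < exp (ln (1 / X \<omega>))" using lt by simp
          also have "\<dots> = 1 / X \<omega>" using Xp by simp
          finally have "exp t < 1 / X \<omega>" .
          then have "X \<omega> < 1 / exp t" using Xp by (simp add: field_simps)
          then show "X \<omega> \<le> exp (- t)" by (simp add: exp_minus field_simps)
        qed
        have "emeasure M S \<le> emeasure M {\<omega>\<in>space M. X \<omega> \<le> exp (- t)}"
          by (rule emeasure_mono[OF sub]) measurable
        also have "\<dots> = ennreal (measure M {\<omega>\<in>space M. X \<omega> \<le> exp (- t)})"
          by (simp add: P.emeasure_eq_measure)
        also have "\<dots> \<le> ennreal (\<alpha> * exp (- t) powr k)"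
          using assms(7) by (intro ennreal_leI) auto
        also have "exp (- t) powr k = exp (- k * t)" by (simp add: powr_def)
        finally show ?thesis using e ht by simp
      qed
    qed
  qed
  have hi: "(\<integral>\<^sup>+ t. h t \<partial>lborel) = ennreal (t0 - 1) + ennreal (1 / k)"
  proof -
    have "(\<integral>\<^sup>+ t. h t \<partial>lborel) = (\<integral>\<^sup>+ t. indicator {1<..<t0} t \<partial>lborel)
       + (\<integral>\<^sup>+ t. ennreal (\<alpha> * exp (- k * t)) * indicator {t0..} t \<partial>lborel)"
      unfolding h_def by (intro nn_integral_add) measurable
    also have "(\<integral>\<^sup>+ t. indicator {1<..<t0} t \<partial>lborel) = ennreal (t0 - 1)"
      using t0 by simp
    also have "(\<integral>\<^sup>+ t. ennreal (\<alpha> * exp (- k * t)) * indicator {t0..} t \<partial>lborel)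
        = ennreal (0 - (- (\<alpha> / k) * exp (- k * t0)))"
    proof (rule nn_integral_FTC_atLeast)
      show "(\<lambda>t. \<alpha> * exp (- k * t)) \<in> borel_measurable borel" by measurable
      show "((\<lambda>x. - (\<alpha> / k) * exp (- k * x)) has_real_derivative \<alpha> * exp (- k * x)) (at x)" for x
        using assms(5) by (auto intro!: derivative_eq_intros simp: field_simps)
      show "0 \<le> \<alpha> * exp (- k * x)" for x using assms(4) by simp
      show "((\<lambda>x. - (\<alpha> / k) * exp (- k * x)) \<longlongrightarrow> 0) at_top" using assms(5) by real_asymp
    qed
    also have "0 - (- (\<alpha> / k) * exp (- k * t0)) = 1 / k"
    proof -
      have "exp (- k * t0) = 1 / \<alpha>" using assms(4,5) by (simp add: t0_def exp_minus inverse_eq_divide)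
      then show ?thesis using assms(4) by simp
    qed
    finally show ?thesis .
  qed
  have "(\<integral>\<^sup>+ \<omega>. ennreal (max 1 (ln (1 / X \<omega>))) \<partial>M) \<le> 1 + (ennreal (t0 - 1) + ennreal (1 / k))"
    unfolding eq1 hi[symmetric] by (intro add_mono order.refl nn_integral_mono hb)
  also have "\<dots> = ennreal ((1 + ln \<alpha>) / k)"
  proof -
    have "1 + (ennreal (t0 - 1) + ennreal (1 / k)) = ennreal (1 + ((t0 - 1) + 1 / k))"
      using t0 assms(5) ennreal_plus[of 1 "(t0 - 1) + 1 / k"] ennreal_plus[of "t0 - 1" "1 / k"] by simp
    also have "1 + ((t0 - 1) + 1 / k) = (1 + ln \<alpha>) / k" by (simp add: t0_def add_divide_distrib)
    finally show ?thesis .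
  qed
  finally show ?thesis .
qed

end
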